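(* Let $A$ be a non-empty set, $I$ a non-empty index set, $\{V_i\}_{i\in I}\subseteq\mathcal R(A)$, $E$ a fuzzy equivalence on $A$, and $(A/E,I,V_i^{A/E})$ the quotient fuzzy relational system of $(A,I,V_i)$ with respect to $E$. Then the fuzzy relation $E^\natural\in\mathcal R(A,A/E)$ defined by $E^\natural(a_1,E_{a_2})=E(a_1,a_2)$ for all $a_1,a_2\in A$ is a uniform fuzzy relation whose kernel is $E$. Moreover, $E^\natural$ is a solution both to $WL^{2\text{-}1}(A,A/E,I,V_i,V_i^{A/E})$ and to $WL^{2\text{-}2}(A,A/E,I,V_i,V_i^{A/E})$.
   Context: $\mathcal L=(L,\wedge,\vee,\otimes,\to,0,1)$ is a complete residuated lattice; $x\leftrightarrow y=(x\to y)\wedge(y\to x)$. For non-empty sets $X,Y$, $\mathcal R(X,Y)$ is the set of fuzzy relations $X\times Y\to L$, $\mathcal R(X)=\mathcal R(X,X)$, ordered pointwise; $R^{-1}(y,x)=R(x,y)$; $(R\circ S)(x,t)=\bigvee_{y}R(x,y)\otimes S(y,t)$. A fuzzy equivalence $E$ on $A$ is a fuzzy relation that is reflexive ($E(a,a)=1$), symmetric and transitive ($E(a,b)\otimes E(b,c)\le E(a,c)$). For $a\in A$, $E_a$ is the fuzzy subset $x\mapsto E(a,x)$, and $A/E=\{E_a:a\in A\}$. The quotient fuzzy relational system is $(A/E,I,V_i^{A/E})$ with $V_i^{A/E}(E_{a_1},E_{a_2})=(E\circ V_i\circ E)(a_1,a_2)$ (well defined). For $R\in\mathcal R(X,Y)$: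 kernel $E_X^R(x_1,x_2)=\bigwedge_{y}R(x_1,y)\leftrightarrow R(x_2,y)$, co-kernel $E_Y^R(y_1,y_2)=\bigwedge_xR(x,y_1)\leftrightarrow R(x,y_2)$. $R$ is a uniform fuzzy relation if for every $x$ there is $y$ with $R(x,y)=1$, for every $y$ there is $x$ with $R(x,y)=1$, and $R(x,y_1)\otimes R(x,y_2)\le E_Y^R(y_1,y_2)$ for all $x,y_1,y_2$. Heterogeneous systems (given non-empty sets $P,Q$, $\{V_i\}\subseteq\mathcal R(P)$, $\{W_i\}\subseteq\mathcal R(Q)$, unknown $U\in\mathcal R(P,Q)$, with the bound $U\le Z$ trivial since $Z$ is omitted, i.e. constant $1$): $WL^{2\text{-}1}(P,Q,I,V_i,W_i)$: $U^{-1}\circ V_i\le W_i\circ U^{-1}$ for all $i\in I$; $WL^{2\text{-}2}(P,Q,I,V_i,W_i)$: $V_i\circ U\le U\circ W_i$ for all $i\in I$. *)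

theory Defs
  imports Main
begin

text \<open>Complete residuated lattice: the carrier is a type of class complete_lattice
  (with 0 = bot, 1 = top); the multiplication is tensor, the residuum is impl.\<close>
definition complete_residuated_lattice ::
  "('l::complete_lattice \<Rightarrow> 'l \<Rightarrow> 'l) \<Rightarrow> ('l \<Rightarrow> 'l \<Rightarrow> 'l) \<Rightarrow> bool" where
  "complete_residuated_lattice tensor impl \<longleftrightarrow>
     (\<forall>x y z. tensor (tensor x y) z = tensor x (tensor y z)) \<and>
     (\<forall>x y. tensor x y = tensor y x) \<and>
     (\<forall>x. tensor x top = x) \<and>
     (\<forall>x y z. tensor x y \<le> z \<longleftrightarrow> x \<le> impl y z)"

definition biimpl :: "('l::complete_lattice \<Rightarrow> 'l \<Rightarrow> 'l) \<Rightarrow> 'l \<Rightarrow> 'l \<Rightarrow> 'l" where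
  "biimpl impl x y = inf (impl x y) (impl y x)"

definition frel_comp ::
  "('l::complete_lattice \<Rightarrow> 'l \<Rightarrow> 'l) \<Rightarrow> 'b set \<Rightarrow> ('a \<Rightarrow> 'b \<Rightarrow> 'l) \<Rightarrow> ('b \<Rightarrow> 'c \<Rightarrow> 'l) \<Rightarrow> 'a \<Rightarrow> 'c \<Rightarrow> 'l" where
  "frel_comp tensor Y R S x t = (SUP y\<in>Y. tensor (R x y) (S y t))"

definition frel_conv :: "('a \<Rightarrow> 'b \<Rightarrow> 'l) \<Rightarrow> 'b \<Rightarrow> 'a \<Rightarrow> 'l" where
  "frel_conv R y x = R x y"

text \<open>Fuzzy equivalence on the whole type 'a (the set A is the type 'a).\<close>
definition fuzzy_equivalence :: "('l::complete_lattice \<Rightarrow> 'l \<Rightarrow> 'l) \<Rightarrow> ('a \<Rightarrow> 'a \<Rightarrow> 'l) \<Rightarrow> bool" where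
  "fuzzy_equivalence tensor E \<longleftrightarrow>
     (\<forall>a. E a a = top) \<and> (\<forall>a b. E a b = E b a) \<and>
     (\<forall>a b c. tensor (E a b) (E b c) \<le> E a c)"

definition frel_kernel ::
  "('l::complete_lattice \<Rightarrow> 'l \<Rightarrow> 'l) \<Rightarrow> 'b set \<Rightarrow> ('a \<Rightarrow> 'b \<Rightarrow> 'l) \<Rightarrow> 'a \<Rightarrow> 'a \<Rightarrow> 'l" where
  "frel_kernel impl Y R x1 x2 = (INF y\<in>Y. biimpl impl (R x1 y) (R x2 y))"

definition frel_cokernel ::
  "('l::complete_lattice \<Rightarrow> 'l \<Rightarrow> 'l) \<Rightarrow> 'a set \<Rightarrow> ('a \<Rightarrow> 'b \<Rightarrow> 'l) \<Rightarrow> 'b \<Rightarrow> 'b \<Rightarrow> 'l" where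
  "frel_cokernel impl X R y1 y2 = (INF x\<in>X. biimpl impl (R x y1) (R x y2))"

definition uniform_frel ::
  "('l::complete_lattice \<Rightarrow> 'l \<Rightarrow> 'l) \<Rightarrow> ('l \<Rightarrow> 'l \<Rightarrow> 'l) \<Rightarrow> 'a set \<Rightarrow> 'b set \<Rightarrow> ('a \<Rightarrow> 'b \<Rightarrow> 'l) \<Rightarrow> bool" where
  "uniform_frel tensor impl X Y R \<longleftrightarrow>
     (\<forall>x\<in>X. \<exists>y\<in>Y. R x y = top) \<and>
     (\<forall>y\<in>Y. \<exists>x\<in>X. R x y = top) \<and>
     (\<forall>x\<in>X. \<forall>y1\<in>Y. \<forall>y2\<in>Y. tensor (R x y1) (R x y2) \<le> frel_cokernel impl X R y1 y2)"

definition quot_set :: "('a \<Rightarrow> 'a \<Rightarrow> 'l) \<Rightarrow> ('a \<Rightarrow> 'l) set" where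
  "quot_set E = range E"

text \<open>Quotient relation V^{A/E}(E_{a1},E_{a2}) = (E o V o E)(a1,a2) (representatives chosen).\<close>
definition quot_rel ::
  "('l::complete_lattice \<Rightarrow> 'l \<Rightarrow> 'l) \<Rightarrow> ('a \<Rightarrow> 'a \<Rightarrow> 'l) \<Rightarrow> ('a \<Rightarrow> 'a \<Rightarrow> 'l) \<Rightarrow> ('a \<Rightarrow> 'l) \<Rightarrow> ('a \<Rightarrow> 'l) \<Rightarrow> 'l" where
  "quot_rel tensor E V C D =
     frel_comp tensor UNIV (frel_comp tensor UNIV E V) E (SOME a. C = E a) (SOME a. D = E a)"

definition nat_frel :: "('a \<Rightarrow> 'a \<Rightarrow> 'l) \<Rightarrow> 'a \<Rightarrow> ('a \<Rightarrow> 'l) \<Rightarrow> 'l" where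
  "nat_frel E a C = E a (SOME b. C = E b)"

text \<open>Heterogeneous weakly linear systems (no upper bound Z), unknown U in R(P,Q).\<close>
definition WL21 ::
  "('l::complete_lattice \<Rightarrow> 'l \<Rightarrow> 'l) \<Rightarrow> 'p set \<Rightarrow> 'q set \<Rightarrow> ('i \<Rightarrow> 'p \<Rightarrow> 'p \<Rightarrow> 'l) \<Rightarrow>
   ('i \<Rightarrow> 'q \<Rightarrow> 'q \<Rightarrow> 'l) \<Rightarrow> ('p \<Rightarrow> 'q \<Rightarrow> 'l) \<Rightarrow> bool" where
  "WL21 tensor P Q V W U \<longleftrightarrow>
     (\<forall>i. \<forall>q\<in>Q. \<forall>p\<in>P.
        frel_comp tensor P (frel_conv U) (V i) q p \<le> frel_comp tensor Q (W i) (frel_conv U) q p)"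

definition WL22 ::
  "('l::complete_lattice \<Rightarrow> 'l \<Rightarrow> 'l) \<Rightarrow> 'p set \<Rightarrow> 'q set \<Rightarrow> ('i \<Rightarrow> 'p \<Rightarrow> 'p \<Rightarrow> 'l) \<Rightarrow>
   ('i \<Rightarrow> 'q \<Rightarrow> 'q \<Rightarrow> 'l) \<Rightarrow> ('p \<Rightarrow> 'q \<Rightarrow> 'l) \<Rightarrow> bool" where
  "WL22 tensor P Q V W U \<longleftrightarrow>
     (\<forall>i. \<forall>p\<in>P. \<forall>q\<in>Q.
        frel_comp tensor P (V i) U p q \<le> frel_comp tensor Q U (W i) p q)"

end

theory Submission
  imports Defs
begin

lemma crl_facts:
  assumes "complete_residuated_lattice tensor impl"
  shows "tensor (tensor x y) z = tensor x (tensor y z)" "tensor x y = tensor y x"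
    "tensor x top = x" "tensor top x = x" "tensor x y \<le> z \<longleftrightarrow> x \<le> impl y z"
proof -
  have A: "\<forall>x y z. tensor (tensor x y) z = tensor x (tensor y z)" and C: "\<forall>x y. tensor x y = tensor y x"
   and T: "\<forall>x. tensor x top = x" and R: "\<forall>x y z. tensor x y \<le> z \<longleftrightarrow> x \<le> impl y z"
    using assms unfolding complete_residuated_lattice_def by auto
  show "tensor (tensor x y) z = tensor x (tensor y z)" using A by blast
  show "tensor x y = tensor y x" using C by blast
  show "tensor x top = x" using T by blast
  show "tensor top x = x" using T C by metis
  show "tensor x y \<le> z \<longleftrightarrow> x \<le> impl y z" using R by blast
qed

lemma tmono:
  assumes "complete_residuated_lattice tensor impl" "x \<le> y" "z \<le> w"
  shows "tensor x z \<le> tensor y w"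
proof -
  note R = crl_facts(5)[OF assms(1)]
  note C = crl_facts(2)[OF assms(1)]
  have "y \<le> impl w (tensor y w)" using R[of y w "tensor y w"] by simp
  hence "x \<le> impl w (tensor y w)" using assms(2) by (rule order_trans[rotated])
  hence 1: "tensor x w \<le> tensor y w" using R[of x w "tensor y w"] by simp
  have "w \<le> impl x (tensor w x)" using R[of w x "tensor w x"] by simp
  hence "z \<le> impl x (tensor w x)" using assms(3) by (rule order_trans[rotated])
  hence "tensor z x \<le> tensor w x" using R[of z x "tensor w x"] by simp
  hence "tensor x z \<le> tensor x w" using C[of x z] C[of x w] by simp
  then show ?thesis using 1 by (rule order_trans)
qed

lemma feq:
  assumes "fuzzy_equivalence tensor E"
  shows "E a a = top" "E a b = E b a" "tensor (E a b) (E b c) \<le> E a c"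
  using assms unfolding fuzzy_equivalence_def by blast+

lemma nat_val:
  assumes "fuzzy_equivalence tensor E"
  shows "nat_frel E a (E b) = E a b"
proof -
  have "E b = E (SOME b'. E b = E b')" by (rule someI[of "\<lambda>b'. E b = E b'" b]) simp
  then have "E b a = E (SOME b'. E b = E b') a" by metis
  then show ?thesis unfolding nat_frel_def using feq(2)[OF assms] by metis
qed

lemma quot_val:
  assumes "fuzzy_equivalence tensor E"
  shows "quot_rel tensor E V (E b) (E c) = frel_comp tensor UNIV (frel_comp tensor UNIV E V) E b c"
proof -
  have hb: "E (SOME b'. E b = E b') = E b" by (rule someI[of "\<lambda>b'. E b = E b'" b, symmetric]) simp
  have hc: "E (SOME b'. E c = E b') = E c" by (rule someI[of "\<lambda>b'. E c = E b'" c, symmetric]) simp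
  have hz: "\<And>z. E z (SOME b'. E c = E b') = E z c" using hc feq(2)[OF assms] by metis
  show ?thesis unfolding quot_rel_def frel_comp_def hb hz ..
qed

lemma E_le_bi:
  assumes "complete_residuated_lattice tensor impl" "fuzzy_equivalence tensor E"
  shows "E b1 b2 \<le> impl (E x b1) (E x b2)"
proof -
  have "tensor (E x b1) (E b1 b2) \<le> E x b2" by (rule feq(3)[OF assms(2)])
  then show ?thesis using crl_facts(2,5)[OF assms(1)] by metis
qed

lemma E_le_biimpl:
  assumes "complete_residuated_lattice tensor impl" "fuzzy_equivalence tensor E"
  shows "E b1 b2 \<le> biimpl impl (E x b1) (E x b2)"
  unfolding biimpl_def using E_le_bi[OF assms, of b1 b2 x] E_le_bi[OF assms, of b2 b1 x]
    feq(2)[OF assms(2), of b1 b2] by simp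

theorem theorem6p1:
  fixes tensor impl :: "'l::complete_lattice \<Rightarrow> 'l \<Rightarrow> 'l"
    and E :: "'a \<Rightarrow> 'a \<Rightarrow> 'l"
    and V :: "'i \<Rightarrow> 'a \<Rightarrow> 'a \<Rightarrow> 'l"
  assumes "complete_residuated_lattice tensor impl"
    and "fuzzy_equivalence tensor E"
  shows "uniform_frel tensor impl UNIV (quot_set E) (nat_frel E)
    \<and> (\<forall>a1 a2. frel_kernel impl (quot_set E) (nat_frel E) a1 a2 = E a1 a2)
    \<and> WL21 tensor UNIV (quot_set E) V (\<lambda>i. quot_rel tensor E (V i)) (nat_frel E)
    \<and> WL22 tensor UNIV (quot_set E) V (\<lambda>i. quot_rel tensor E (V i)) (nat_frel E)"
proof (intro conjI allI)
  note cr = crl_facts[OF assms(1)]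
  note fe = feq[OF assms(2)]
  note nv = nat_val[OF assms(2)]
  note qv = quot_val[OF assms(2)]
  show "uniform_frel tensor impl UNIV (quot_set E) (nat_frel E)"
    unfolding uniform_frel_def quot_set_def
  proof (intro conjI ballI)
    fix x show "\<exists>y\<in>range E. nat_frel E x y = top"
      by (rule bexI[of _ "E x"]) (simp_all add: nv fe(1))
  next
    fix y assume "y \<in> range E" then obtain b where "y = E b" by blast
    then show "\<exists>x\<in>UNIV. nat_frel E x y = top"
      by (intro bexI[of _ b]) (simp_all add: nv fe(1))
  next
    fix x y1 y2 assume "y1 \<in> range E" "y2 \<in> range E"
    then obtain b1 b2 where y: "y1 = E b1" "y2 = E b2" by blast
    have "tensor (E x b1) (E x b2) \<le> E b1 b2" using fe(2)[of x b1] fe(3)[of b1 x b2] by simp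
    also have "\<dots> \<le> frel_cokernel impl UNIV (nat_frel E) y1 y2"
      unfolding frel_cokernel_def y nv by (rule INF_greatest) (rule E_le_biimpl[OF assms])
    finally show "tensor (nat_frel E x y1) (nat_frel E x y2) \<le> frel_cokernel impl UNIV (nat_frel E) y1 y2"
      unfolding y nv .
  qed
next
  fix a1 a2
  note cr = crl_facts[OF assms(1)]
  note fe = feq[OF assms(2)]
  note nv = nat_val[OF assms(2)]
  have "frel_kernel impl (quot_set E) (nat_frel E) a1 a2 = (INF b. biimpl impl (E a1 b) (E a2 b))"
    unfolding frel_kernel_def quot_set_def by (simp add: image_image nv)
  also have "\<dots> = E a1 a2"
  proof (rule antisym)
    have "(INF b. biimpl impl (E a1 b) (E a2 b)) \<le> biimpl impl (E a1 a2) (E a2 a2)" by (rule INF_lower) simp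
    also have "\<dots> \<le> impl top (E a1 a2)" unfolding biimpl_def fe(1) by simp
    also have "\<dots> \<le> E a1 a2"
    proof -
      have "tensor (impl top (E a1 a2)) top \<le> E a1 a2" using cr(5) by blast
      then show ?thesis using cr(3) by simp
    qed
    finally show "(INF b. biimpl impl (E a1 b) (E a2 b)) \<le> E a1 a2" .
  next
    show "E a1 a2 \<le> (INF b. biimpl impl (E a1 b) (E a2 b))"
    proof (rule INF_greatest)
      fix b
      have "E a1 a2 \<le> biimpl impl (E b a1) (E b a2)" by (rule E_le_biimpl[OF assms])
      then show "E a1 a2 \<le> biimpl impl (E a1 b) (E a2 b)" using fe(2) by metis
    qed
  qed
  finally show "frel_kernel impl (quot_set E) (nat_frel E) a1 a2 = E a1 a2" .
next
  note cr = crl_facts[OF assms(1)]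
  note fe = feq[OF assms(2)]
  note nv = nat_val[OF assms(2)]
  note qv = quot_val[OF assms(2)]
  show "WL21 tensor UNIV (quot_set E) V (\<lambda>i. quot_rel tensor E (V i)) (nat_frel E)"
    unfolding WL21_def quot_set_def
  proof (intro allI ballI)
    fix i q p assume "q \<in> range E"
    then obtain b where q: "q = E b" by blast
    show "frel_comp tensor UNIV (frel_conv (nat_frel E)) (V i) q p
       \<le> frel_comp tensor (range E) (quot_rel tensor E (V i)) (frel_conv (nat_frel E)) q p"
      unfolding frel_comp_def[of _ UNIV] q
    proof (rule SUP_least)
      fix y
      have "tensor (frel_conv (nat_frel E) (E b) y) (V i y p) = tensor (E b y) (V i y p)"
        unfolding frel_conv_def nv using fe(2) by metis
      also have "\<dots> \<le> (SUP y. tensor (E b y) (V i y p))" by (rule SUP_upper) simp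
      also have "\<dots> = tensor (SUP y. tensor (E b y) (V i y p)) (E p p)" using fe(1) cr(3) by simp
      also have "\<dots> \<le> frel_comp tensor UNIV (frel_comp tensor UNIV E (V i)) E b p"
        unfolding frel_comp_def[of _ UNIV] by (rule SUP_upper[where i=p]) simp
      also have "\<dots> = tensor (quot_rel tensor E (V i) (E b) (E p)) (frel_conv (nat_frel E) (E p) p)"
        unfolding frel_conv_def nv qv fe(1) cr(3) ..
      also have "\<dots> \<le> frel_comp tensor (range E) (quot_rel tensor E (V i)) (frel_conv (nat_frel E)) (E b) p"
        unfolding frel_comp_def by (rule SUP_upper) simp
      finally show "tensor (frel_conv (nat_frel E) (E b) y) (V i y p) \<le> frel_comp tensor (range E) (quot_rel tensor E (V i)) (frel_conv (nat_frel E)) (E b) p" .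
    qed
  qed
next
  note cr = crl_facts[OF assms(1)]
  note fe = feq[OF assms(2)]
  note nv = nat_val[OF assms(2)]
  note qv = quot_val[OF assms(2)]
  show "WL22 tensor UNIV (quot_set E) V (\<lambda>i. quot_rel tensor E (V i)) (nat_frel E)"
    unfolding WL22_def quot_set_def
  proof (intro allI ballI)
    fix i p q assume "q \<in> range E"
    then obtain c where q: "q = E c" by blast
    show "frel_comp tensor UNIV (V i) (nat_frel E) p q
       \<le> frel_comp tensor (range E) (nat_frel E) (quot_rel tensor E (V i)) p q"
      unfolding frel_comp_def[of _ UNIV "V i"] q nv
    proof (rule SUP_least)
      fix y
      have "tensor (V i p y) (E y c) = tensor (tensor (E p p) (V i p y)) (E y c)" using fe(1) cr(4) by simp
      also have "\<dots> \<le> tensor (frel_comp tensor UNIV E (V i) p y) (E y c)"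
        unfolding frel_comp_def by (rule tmono[OF assms(1)]) (rule SUP_upper, simp, simp)
      also have "\<dots> \<le> frel_comp tensor UNIV (frel_comp tensor UNIV E (V i)) E p c"
        unfolding frel_comp_def[of _ UNIV _ E] by (rule SUP_upper) simp
      also have "\<dots> = tensor (nat_frel E p (E p)) (quot_rel tensor E (V i) (E p) (E c))"
        unfolding nv qv fe(1) cr(4) ..
      also have "\<dots> \<le> frel_comp tensor (range E) (nat_frel E) (quot_rel tensor E (V i)) p (E c)"
        unfolding frel_comp_def[of _ "range E"] by (rule SUP_upper) simp
      finally show "tensor (V i p y) (E y c) \<le> frel_comp tensor (range E) (nat_frel E) (quot_rel tensor E (V i)) p (E c)" .
    qed
  qed
qed

end
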